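(* The Skolem problem is reducible to the Point-To-Point Reachability problem (P2P) for polynomial recursive sequences: there is an algorithm that, given an instance of the Skolem problem (a linear recurrence sequence $u$), computes an instance of P2P (a system of polynomial recursive sequences together with a target vector) such that $u$ has a zero if and only if the system reaches the target vector. Consequently, a decision procedure for P2P would yield a decision procedure for the Skolem problem.
   Context: The Skolem problem: given $k\ge1$, coefficients $a_0,\dots,a_{k-1}\in\mathbb{Q}$ with $a_0\neq0$ and initial values $u(0),\dots,u(k-1)\in\mathbb{Q}$, defining the linear recurrence sequence $u:\mathbb{N}_0\to\mathbb{Q}$ by $u(n+k)=\sum_{i=0}^{k-1}a_iu(n+i)$, decide whether there exists $m\in\mathbb{N}_0$ with $u(m)=0$. The P2P problem: given $k\ge1$, polynomials $p_1,\dots,p_k\in\mathbb{Q}[y_1,\dots,y_k]$, initial values $u_1(0),\dots,u_k(0)\in\mathbb{Q}$, defining sequences by $u_i(n+1)=p_i(u_1(n),\dots,u_k(n))$ for all $n\ge0$, and a target vector $(t_1,\dots,t_k)\in\mathbb{Q}^k$, decide whether there exists $m\in\mathbb{N}_0$ with $u_i(m)=t_i$ for all $1\le i\le k$. *)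

theory Defs
  imports Complex_Main "HOL-Library.Nat_Bijection"
begin

text \<open>A Skolem instance is a triple (k, a, u0): order k, coefficient list
  a = [a_0,...,a_{k-1}] and initial values u0 = [u(0),...,u(k-1)].\<close>

type_synonym skolem_inst = "nat \<times> rat list \<times> rat list"

definition skolem_wf :: "skolem_inst \<Rightarrow> bool" where
  "skolem_wf I = (case I of (k, a, u0) \<Rightarrow>
     k \<ge> 1 \<and> length a = k \<and> length u0 = k \<and> a ! 0 \<noteq> 0)"

text \<open>Window of k consecutive terms: lrs_window k a u0 n = [u(n),...,u(n+k-1)].\<close>
primrec lrs_window :: "nat \<Rightarrow> rat list \<Rightarrow> rat list \<Rightarrow> nat \<Rightarrow> rat list" where
  "lrs_window k a u0 0 = u0"
| "lrs_window k a u0 (Suc n) =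
     (let w = lrs_window k a u0 n in tl w @ [\<Sum>i<k. a ! i * w ! i])"

text \<open>u(n+k) = sum_{i<k} a_i u(n+i).\<close>
definition lrs :: "skolem_inst \<Rightarrow> nat \<Rightarrow> rat" where
  "lrs I n = (case I of (k, a, u0) \<Rightarrow> hd (lrs_window k a u0 n))"

definition skolem_has_zero :: "skolem_inst \<Rightarrow> bool" where
  "skolem_has_zero I = (\<exists>m. lrs I m = 0)"

text \<open>A multivariate polynomial over Q in variables y_1..y_k is represented as
  a list of monomials (c, [e_1,...,e_k]) standing for c * y_1^e_1 * ... * y_k^e_k.\<close>

type_synonym mpoly_rep = "(rat \<times> nat list) list"

definition mpoly_wf :: "nat \<Rightarrow> mpoly_rep \<Rightarrow> bool" where
  "mpoly_wf k p = (\<forall>m \<in> set p. length (snd m) = k)"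

definition mpoly_eval :: "mpoly_rep \<Rightarrow> rat list \<Rightarrow> rat" where
  "mpoly_eval p y = (\<Sum>(c, e) \<leftarrow> p. c * (\<Prod>i<length e. (y ! i) ^ (e ! i)))"

text \<open>A P2P instance (k, ps, v0, t): polynomials p_1..p_k, initial values and target.\<close>
type_synonym p2p_inst = "nat \<times> mpoly_rep list \<times> rat list \<times> rat list"

definition p2p_wf :: "p2p_inst \<Rightarrow> bool" where
  "p2p_wf J = (case J of (k, ps, v0, t) \<Rightarrow>
     k \<ge> 1 \<and> length ps = k \<and> length v0 = k \<and> length t = k \<and> (\<forall>p \<in> set ps. mpoly_wf k p))"

primrec p2p_state :: "mpoly_rep list \<Rightarrow> rat list \<Rightarrow> nat \<Rightarrow> rat list" where
  "p2p_state ps v0 0 = v0"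
| "p2p_state ps v0 (Suc n) = map (\<lambda>p. mpoly_eval p (p2p_state ps v0 n)) ps"

definition p2p_reaches :: "p2p_inst \<Rightarrow> bool" where
  "p2p_reaches J = (case J of (k, ps, v0, t) \<Rightarrow> \<exists>m. p2p_state ps v0 m = t)"

definition enc_rat :: "rat \<Rightarrow> nat" where
  "enc_rat q = (case quotient_of q of (a, b) \<Rightarrow> prod_encode (int_encode a, int_encode b))"

definition enc_rats :: "rat list \<Rightarrow> nat" where
  "enc_rats xs = list_encode (map enc_rat xs)"

definition enc_skolem :: "skolem_inst \<Rightarrow> nat" where
  "enc_skolem I = (case I of (k, a, u0) \<Rightarrow> prod_encode (k, prod_encode (enc_rats a, enc_rats u0)))"

definition enc_mono :: "rat \<times> nat list \<Rightarrow> nat" where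
  "enc_mono m = prod_encode (enc_rat (fst m), list_encode (snd m))"

definition enc_mpoly :: "mpoly_rep \<Rightarrow> nat" where
  "enc_mpoly p = list_encode (map enc_mono p)"

definition enc_p2p :: "p2p_inst \<Rightarrow> nat" where
  "enc_p2p J = (case J of (k, ps, v0, t) \<Rightarrow>
     prod_encode (k, prod_encode (list_encode (map enc_mpoly ps),
                                  prod_encode (enc_rats v0, enc_rats t))))"

datatype recf = Zero | Succ | Proj nat | Cn recf "recf list" | Pr recf recf | Mn recf

inductive reval :: "recf \<Rightarrow> nat list \<Rightarrow> nat \<Rightarrow> bool" where
  "reval Zero xs 0"
| "reval Succ [x] (Suc x)"
| "i < length xs \<Longrightarrow> reval (Proj i) xs (xs ! i)"
| "list_all2 (\<lambda>g y. reval g xs y) gs ys \<Longrightarrow> reval f ys z \<Longrightarrow> reval (Cn f gs) xs z"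
| "reval f xs y \<Longrightarrow> reval (Pr f g) (0 # xs) y"
| "reval (Pr f g) (n # xs) y \<Longrightarrow> reval g (n # y # xs) z \<Longrightarrow> reval (Pr f g) (Suc n # xs) z"
| "reval f (n # xs) 0 \<Longrightarrow> (\<forall>m<n. \<exists>y. y > 0 \<and> reval f (m # xs) y) \<Longrightarrow> reval (Mn f) xs n"
monos list_all2_mono

end

theory Submission
  imports Defs
begin

definition rcomp :: "nat \<Rightarrow> (nat list \<Rightarrow> nat) \<Rightarrow> bool" where
  "rcomp n f \<longleftrightarrow> (\<exists>R. \<forall>xs. length xs = n \<longrightarrow> reval R xs (f xs))"

lemma rcomp_cong: "rcomp n f \<Longrightarrow> (\<And>xs. length xs = n \<Longrightarrow> f xs = g xs) \<Longrightarrow> rcomp n g"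
  unfolding rcomp_def by metis

lemma rcomp_zero: "rcomp n (\<lambda>_. 0)"
  unfolding rcomp_def by (metis reval.intros(1))

lemma rcomp_proj: "i < n \<Longrightarrow> rcomp n (\<lambda>xs. xs ! i)"
  unfolding rcomp_def by (metis reval.intros(3))

lemma rcomp_Cn:
  assumes "rcomp m g" "length fs = m" "\<forall>f\<in>set fs. rcomp n f"
  shows "rcomp n (\<lambda>xs. g (map (\<lambda>f. f xs) fs))"
proof -
  obtain G where G: "\<forall>xs. length xs = m \<longrightarrow> reval G xs (g xs)" using assms(1) rcomp_def by auto
  have "\<forall>i. \<exists>R. i < length fs \<longrightarrow> (\<forall>xs. length xs = n \<longrightarrow> reval R xs ((fs!i) xs))"
    using assms(3) unfolding rcomp_def by (meson nth_mem)
  from choice[OF this] obtain Rf where Rf: "\<forall>i. i < length fs \<longrightarrow> (\<forall>xs. length xs = n \<longrightarrow> reval (Rf i) xs ((fs!i) xs))"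
    by blast
  show ?thesis unfolding rcomp_def
  proof (intro exI allI impI)
    fix xs :: "nat list" assume "length xs = n"
    have "list_all2 (\<lambda>gg y. reval gg xs y) (map Rf [0..<length fs]) (map (\<lambda>f. f xs) fs)"
      using Rf \<open>length xs = n\<close> by (auto simp: list_all2_conv_all_nth)
    moreover have "reval G (map (\<lambda>f. f xs) fs) (g (map (\<lambda>f. f xs) fs))" using G assms(2) by simp
    ultimately show "reval (Cn G (map Rf [0..<length fs])) xs (g (map (\<lambda>f. f xs) fs))"
      by (rule reval.intros(4))
  qed
qed

lemma rcomp_comp1:
  assumes "rcomp 1 (\<lambda>xs. h (xs!0))" "rcomp n f"
  shows "rcomp n (\<lambda>xs. h (f xs))"
  using rcomp_Cn[OF assms(1), of "[f]" n] assms(2) by simp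

lemma rcomp_comp2:
  assumes "rcomp 2 (\<lambda>xs. h (xs!0) (xs!1))" "rcomp n f" "rcomp n g"
  shows "rcomp n (\<lambda>xs. h (f xs) (g xs))"
  using rcomp_Cn[OF assms(1), of "[f, g]" n] assms(2,3) by simp

lemma rcomp_comp3:
  assumes "rcomp 3 (\<lambda>xs. h (xs!0) (xs!1) (xs!2))" "rcomp n f" "rcomp n g" "rcomp n e"
  shows "rcomp n (\<lambda>xs. h (f xs) (g xs) (e xs))"
  using rcomp_Cn[OF assms(1), of "[f, g, e]" n] assms(2,3,4) by simp

lemma rcomp_succ1: "rcomp 1 (\<lambda>xs. Suc (xs!0))"
  unfolding rcomp_def
proof (intro exI allI impI)
  fix xs :: "nat list" assume "length xs = 1"
  then obtain x where "xs = [x]" by (metis One_nat_def length_0_conv length_Suc_conv)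
  then show "reval Succ xs (Suc (xs!0))" by (simp add: reval.intros(2))
qed

lemma rcomp_suc: "rcomp n f \<Longrightarrow> rcomp n (\<lambda>xs. Suc (f xs))"
  by (rule rcomp_comp1[OF rcomp_succ1])

lemma rcomp_const: "rcomp n (\<lambda>_. c)"
  by (induction c) (auto intro: rcomp_zero rcomp_suc)

primrec PR :: "(nat list \<Rightarrow> nat) \<Rightarrow> (nat list \<Rightarrow> nat) \<Rightarrow> nat \<Rightarrow> nat list \<Rightarrow> nat" where
  "PR f g 0 ys = f ys"
| "PR f g (Suc i) ys = g (i # PR f g i ys # ys)"

lemma rcomp_Pr:
  assumes "rcomp n f" "rcomp (Suc (Suc n)) g"
  shows "rcomp (Suc n) (\<lambda>xs. PR f g (hd xs) (tl xs))"
proof -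
  obtain F where F: "\<forall>xs. length xs = n \<longrightarrow> reval F xs (f xs)" using assms(1) rcomp_def by auto
  obtain G where G: "\<forall>xs. length xs = Suc (Suc n) \<longrightarrow> reval G xs (g xs)" using assms(2) rcomp_def by auto
  have *: "length ys = n \<Longrightarrow> reval (Pr F G) (i # ys) (PR f g i ys)" for i ys
  proof (induction i)
    case 0 then show ?case using F by (simp add: reval.intros(5))
  next
    case (Suc i) then show ?case using G by (simp add: reval.intros(6))
  qed
  show ?thesis unfolding rcomp_def
  proof (intro exI allI impI)
    fix xs :: "nat list" assume "length xs = Suc n"
    then obtain a ys where "xs = a # ys" "length ys = n" by (metis length_Suc_conv)
    then show "reval (Pr F G) xs (PR f g (hd xs) (tl xs))" using * by simp
  qed
qed

lemma rcomp_Mn: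
  assumes "rcomp (Suc n) (\<lambda>ys. f (hd ys) (tl ys))" "\<And>xs. length xs = n \<Longrightarrow> \<exists>j. f j xs = 0"
  shows "rcomp n (\<lambda>xs. LEAST j. f j xs = 0)"
proof -
  obtain F where F: "\<forall>ys. length ys = Suc n \<longrightarrow> reval F ys (f (hd ys) (tl ys))"
    using assms(1) rcomp_def by auto
  show ?thesis unfolding rcomp_def
  proof (intro exI allI impI)
    fix xs :: "nat list" assume l: "length xs = n"
    let ?j = "LEAST j. f j xs = 0"
    have z: "f ?j xs = 0" using assms(2)[OF l] by (rule LeastI_ex)
    have "reval F (?j # xs) 0" using F[rule_format, of "?j # xs"] l z by simp
    moreover have "\<forall>m<?j. \<exists>y. y > 0 \<and> reval F (m # xs) y"
    proof (intro allI impI)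
      fix m assume "m < ?j"
      then have "f m xs \<noteq> 0" by (rule not_less_Least)
      moreover have "reval F (m # xs) (f m xs)" using F[rule_format, of "m # xs"] l by simp
      ultimately show "\<exists>y. y > 0 \<and> reval F (m # xs) y" by blast
    qed
    ultimately show "reval (Mn F) xs ?j" by (rule reval.intros(7))
  qed
qed

lemma rcomp_hd: "0 < n \<Longrightarrow> rcomp n hd"
  by (rule rcomp_cong[OF rcomp_proj[of 0 n]]) (auto simp: hd_conv_nth)

lemma rcomp_tl_nth: "Suc i < n \<Longrightarrow> rcomp n (\<lambda>xs. tl xs ! i)"
  by (rule rcomp_cong[OF rcomp_proj[of "Suc i" n]]) (auto simp: nth_tl)

lemma rcomp_add2: "rcomp 2 (\<lambda>xs. xs!0 + xs!1)"
proof -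
  have A: "rcomp (Suc (Suc 0)) (\<lambda>xs. PR (\<lambda>ys. ys!0) (\<lambda>ys. Suc (ys!Suc 0)) (hd xs) (tl xs))"
    by (rule rcomp_Pr) (auto intro!: rcomp_proj rcomp_suc)
  have B: "PR (\<lambda>ys. ys!0) (\<lambda>ys. Suc (ys!Suc 0)) a [b] = a + b" for a b by (induction a) auto
  show ?thesis unfolding numeral_2_eq_2 One_nat_def
  proof (rule rcomp_cong[OF A])
    fix xs :: "nat list" assume "length xs = Suc (Suc 0)"
    then obtain a b where "xs = [a, b]" by (auto simp: length_Suc_conv)
    then show "PR (\<lambda>ys. ys!0) (\<lambda>ys. Suc (ys!Suc 0)) (hd xs) (tl xs) = xs!0 + xs!Suc 0"
      using B[of a b] by (simp only: list.sel nth_Cons_0 nth_Cons_Suc One_nat_def)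
  qed
qed

lemma rcomp_pred1: "rcomp 1 (\<lambda>xs. xs!0 - 1)"
proof -
  have A: "rcomp (Suc 0) (\<lambda>xs. PR (\<lambda>ys. 0) (\<lambda>ys. ys!0) (hd xs) (tl xs))"
    by (rule rcomp_Pr) (auto intro!: rcomp_proj rcomp_zero)
  have B: "PR (\<lambda>ys. 0) (\<lambda>ys. ys!0) a [] = a - 1" for a by (induction a) auto
  show ?thesis unfolding One_nat_def
  proof (rule rcomp_cong[OF A])
    fix xs :: "nat list" assume "length xs = Suc 0"
    then obtain a where "xs = [a]" by (auto simp: length_Suc_conv)
    then show "PR (\<lambda>ys. 0) (\<lambda>ys. ys!0) (hd xs) (tl xs) = xs!0 - Suc 0"
      using B[of a] by (simp only: list.sel nth_Cons_0 nth_Cons_Suc One_nat_def)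
  qed
qed

lemma rcomp_pred: "rcomp n f \<Longrightarrow> rcomp n (\<lambda>xs. f xs - 1)"
  by (rule rcomp_comp1[OF rcomp_pred1])

lemma rcomp_rsub2: "rcomp 2 (\<lambda>xs. xs!1 - xs!0)"
proof -
  have A: "rcomp (Suc (Suc 0)) (\<lambda>xs. PR (\<lambda>ys. ys!0) (\<lambda>ys. ys!Suc 0 - 1) (hd xs) (tl xs))"
    by (rule rcomp_Pr, rule rcomp_proj, simp, rule rcomp_pred, rule rcomp_proj, simp)
  have B: "PR (\<lambda>ys. ys!0) (\<lambda>ys. ys!Suc 0 - 1) a [b] = b - a" for a b by (induction a) auto
  show ?thesis unfolding numeral_2_eq_2 One_nat_def
  proof (rule rcomp_cong[OF A])
    fix xs :: "nat list" assume "length xs = Suc (Suc 0)"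
    then obtain a b where "xs = [a, b]" by (auto simp: length_Suc_conv)
    then show "PR (\<lambda>ys. ys!0) (\<lambda>ys. ys!Suc 0 - 1) (hd xs) (tl xs) = xs!Suc 0 - xs!0"
      using B[of a b] by (simp only: list.sel nth_Cons_0 nth_Cons_Suc One_nat_def)
  qed
qed

lemma rcomp_if3: "rcomp 3 (\<lambda>xs. if xs!0 = 0 then xs!1 else xs!2)"
proof -
  have A: "rcomp (Suc (Suc (Suc 0))) (\<lambda>xs. PR (\<lambda>ys. ys!0) (\<lambda>ys. ys!Suc (Suc (Suc 0))) (hd xs) (tl xs))"
    by (rule rcomp_Pr) (auto intro!: rcomp_proj)
  have B: "PR (\<lambda>ys. ys!0) (\<lambda>ys. ys!Suc (Suc (Suc 0))) a [b, c] = (if a = 0 then b else c)" for a b c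
    by (cases a) auto
  show ?thesis unfolding numeral_2_eq_2 numeral_3_eq_3 One_nat_def
  proof (rule rcomp_cong[OF A])
    fix xs :: "nat list" assume "length xs = Suc (Suc (Suc 0))"
    then obtain a b c where "xs = [a, b, c]" by (auto simp: length_Suc_conv)
    then show "PR (\<lambda>ys. ys!0) (\<lambda>ys. ys!Suc (Suc (Suc 0))) (hd xs) (tl xs) =
       (if xs!0 = 0 then xs!Suc 0 else xs!Suc (Suc 0))"
      using B[of a b c] by (simp only: list.sel nth_Cons_0 nth_Cons_Suc One_nat_def)
  qed
qed

lemma rcomp_tri1: "rcomp 1 (\<lambda>xs. triangle (xs!0))"
proof -
  have A: "rcomp (Suc 0) (\<lambda>xs. PR (\<lambda>ys. 0) (\<lambda>ys. ys!Suc 0 + Suc (ys!0)) (hd xs) (tl xs))"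
    by (rule rcomp_Pr) (auto intro!: rcomp_proj rcomp_zero rcomp_suc rcomp_comp2[OF rcomp_add2])
  have B: "PR (\<lambda>ys. 0) (\<lambda>ys. ys!Suc 0 + Suc (ys!0)) a [] = triangle a" for a by (induction a) auto
  show ?thesis unfolding One_nat_def
  proof (rule rcomp_cong[OF A])
    fix xs :: "nat list" assume "length xs = Suc 0"
    then obtain a where "xs = [a]" by (auto simp: length_Suc_conv)
    then show "PR (\<lambda>ys. 0) (\<lambda>ys. ys!Suc 0 + Suc (ys!0)) (hd xs) (tl xs) = triangle (xs!0)"
      using B[of a] by (simp only: list.sel nth_Cons_0 nth_Cons_Suc One_nat_def)
  qed
qed

lemma rcomp_add [intro]: "rcomp n f \<Longrightarrow> rcomp n g \<Longrightarrow> rcomp n (\<lambda>xs. f xs + g xs)"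
  by (rule rcomp_comp2[OF rcomp_add2])

lemma rcomp_sub [intro]: "rcomp n f \<Longrightarrow> rcomp n g \<Longrightarrow> rcomp n (\<lambda>xs. f xs - g xs)"
  by (rule rcomp_comp2[OF rcomp_rsub2])

lemma rcomp_if [intro]: "rcomp n c \<Longrightarrow> rcomp n f \<Longrightarrow> rcomp n g \<Longrightarrow>
  rcomp n (\<lambda>xs. if c xs = 0 then f xs else g xs)"
  by (rule rcomp_comp3[OF rcomp_if3])

lemma rcomp_tri [intro]: "rcomp n f \<Longrightarrow> rcomp n (\<lambda>xs. triangle (f xs))"
  by (rule rcomp_comp1[OF rcomp_tri1])

lemma rcomp_penc [intro]: "rcomp n f \<Longrightarrow> rcomp n g \<Longrightarrow> rcomp n (\<lambda>xs. prod_encode (f xs, g xs))"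
proof -
  assume a: "rcomp n f" "rcomp n g"
  have "rcomp n (\<lambda>xs. triangle (f xs + g xs) + f xs)"
    using a by (intro rcomp_add rcomp_tri)
  then show ?thesis by (rule rcomp_cong) (simp add: prod_encode_def)
qed

declare rcomp_const [intro] rcomp_suc [intro]

lemma decode_least:
  fixes N :: nat
  defines "s \<equiv> LEAST j. Suc N - triangle (Suc j) = 0"
  shows "prod_decode N = (N - triangle s, s - (N - triangle s))"
proof -
  have ex: "Suc N - triangle (Suc N) = 0" by simp
  have P: "Suc N - triangle (Suc s) = 0" unfolding s_def using ex by (rule LeastI)
  have Q: "triangle s \<le> N"
  proof (cases s)
    case 0 then show ?thesis by simp
  next
    case (Suc s')
    then have "s' < s" by simp
    then have "Suc N - triangle (Suc s') \<noteq> 0" unfolding s_def by (rule not_less_Least)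
    then show ?thesis using Suc by simp
  qed
  have R: "N - triangle s \<le> s" using P by simp
  have "prod_encode (N - triangle s, s - (N - triangle s)) = N"
    using Q R by (simp add: prod_encode_def)
  then show ?thesis by (metis prod_encode_inverse)
qed

lemma rcomp_Cn_drop:
  assumes "rcomp (j + n) G" "\<forall>f\<in>set fs. rcomp (k + n) f" "length fs = j"
  shows "rcomp (k + n) (\<lambda>ys. G (map (\<lambda>f. f ys) fs @ drop k ys))"
proof -
  have A: "rcomp (k + n) (\<lambda>ys. G (map (\<lambda>f. f ys) (fs @ map (\<lambda>i ys. ys ! (k + i)) [0..<n])))"
    by (rule rcomp_Cn[OF assms(1)]) (use assms(2,3) in \<open>auto intro: rcomp_proj\<close>)
  have B: "map (\<lambda>i. ys ! (k + i)) [0..<n] = drop k ys" if "length ys = k + n" for ys :: "nat list"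
    using that by (intro nth_equalityI) auto
  show ?thesis by (rule rcomp_cong[OF A]) (simp add: comp_def B)
qed

lemma rcomp_tl: "rcomp n b \<Longrightarrow> rcomp (Suc n) (\<lambda>ys. b (tl ys))"
  using rcomp_Cn_drop[of 0 n b "[]" 1] by (simp add: drop_Suc)

lemma rcomp_sub_arg:
  assumes "rcomp (Suc n) (\<lambda>ys. g (hd ys) (tl ys))" "rcomp (k + n) e"
  shows "rcomp (k + n) (\<lambda>ys. g (e ys) (drop k ys))"
  using rcomp_Cn_drop[OF _ _, of 1 n "\<lambda>ys. g (hd ys) (tl ys)" "[e]" k] assms by simp

lemma rcomp_fst1: "rcomp 1 (\<lambda>xs. fst (prod_decode (xs!0)))"
proof -
  have L: "rcomp (Suc 0) (\<lambda>xs. LEAST j. (\<lambda>j xs. Suc (xs!0) - triangle (Suc j)) j xs = 0)"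
  proof (rule rcomp_Mn)
    show "rcomp (Suc (Suc 0)) (\<lambda>ys. Suc (tl ys ! 0) - triangle (Suc (hd ys)))"
      by (intro rcomp_sub rcomp_suc rcomp_tri rcomp_tl_nth rcomp_hd) auto
    show "\<exists>j. Suc (xs ! 0) - triangle (Suc j) = 0" for xs by (rule exI[of _ "xs!0"]) simp
  qed
  have "rcomp (Suc 0) (\<lambda>xs. xs!0 - triangle (LEAST j. Suc (xs!0) - triangle (Suc j) = 0))"
    by (intro rcomp_sub rcomp_tri rcomp_proj) (use L in auto)
  then show ?thesis unfolding One_nat_def by (rule rcomp_cong) (simp add: decode_least)
qed

lemma rcomp_snd1: "rcomp 1 (\<lambda>xs. snd (prod_decode (xs!0)))"
proof -
  have L: "rcomp (Suc 0) (\<lambda>xs. LEAST j. (\<lambda>j xs. Suc (xs!0) - triangle (Suc j)) j xs = 0)"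
  proof (rule rcomp_Mn)
    show "rcomp (Suc (Suc 0)) (\<lambda>ys. Suc (tl ys ! 0) - triangle (Suc (hd ys)))"
      by (intro rcomp_sub rcomp_suc rcomp_tri rcomp_tl_nth rcomp_hd) auto
    show "\<exists>j. Suc (xs ! 0) - triangle (Suc j) = 0" for xs by (rule exI[of _ "xs!0"]) simp
  qed
  have "rcomp (Suc 0) (\<lambda>xs. (LEAST j. Suc (xs!0) - triangle (Suc j) = 0) - (xs!0 - triangle (LEAST j. Suc (xs!0) - triangle (Suc j) = 0)))"
    by (intro rcomp_sub rcomp_tri rcomp_proj) (use L in auto)
  then show ?thesis unfolding One_nat_def by (rule rcomp_cong) (simp add: decode_least)
qed

lemma rcomp_fst [intro]: "rcomp n f \<Longrightarrow> rcomp n (\<lambda>xs. fst (prod_decode (f xs)))"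
  by (rule rcomp_comp1[OF rcomp_fst1])

lemma rcomp_snd [intro]: "rcomp n f \<Longrightarrow> rcomp n (\<lambda>xs. snd (prod_decode (f xs)))"
  by (rule rcomp_comp1[OF rcomp_snd1])

definition ctl :: "nat \<Rightarrow> nat" where "ctl X = snd (prod_decode (X - 1))"
definition chd :: "nat \<Rightarrow> nat" where "chd X = fst (prod_decode (X - 1))"
definition nthc :: "nat \<Rightarrow> nat \<Rightarrow> nat" where "nthc X j = chd ((ctl ^^ j) X)"

lemma nthc_correct: "j < length xs \<Longrightarrow> nthc (list_encode xs) j = xs ! j"
proof (induction xs arbitrary: j)
  case Nil then show ?case by simp
next
  case (Cons x xs)
  have tl: "ctl (list_encode (x # xs)) = list_encode xs" by (simp add: ctl_def)
  show ?case
  proof (cases j)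
    case 0 then show ?thesis by (simp add: nthc_def chd_def)
  next
    case (Suc j')
    then have "nthc (list_encode (x # xs)) j = nthc (list_encode xs) j'"
      unfolding nthc_def by (simp add: funpow_Suc_right ctl_def del: funpow.simps)
    then show ?thesis using Cons Suc by simp
  qed
qed

lemma rcomp_tlpow2: "rcomp 2 (\<lambda>xs. (ctl ^^ (xs!0)) (xs!1))"
proof -
  have A: "rcomp (Suc (Suc 0)) (\<lambda>xs. PR (\<lambda>ys. ys!0) (\<lambda>ys. ctl (ys!Suc 0)) (hd xs) (tl xs))"
    unfolding ctl_def by (rule rcomp_Pr) (intro rcomp_snd rcomp_sub rcomp_proj rcomp_const; simp)+
  have B: "PR (\<lambda>ys. ys!0) (\<lambda>ys. ctl (ys!Suc 0)) a [b] = (ctl ^^ a) b" for a b by (induction a) auto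
  show ?thesis unfolding numeral_2_eq_2 One_nat_def
  proof (rule rcomp_cong[OF A])
    fix xs :: "nat list" assume "length xs = Suc (Suc 0)"
    then obtain a b where "xs = [a, b]" by (auto simp: length_Suc_conv)
    then show "PR (\<lambda>ys. ys!0) (\<lambda>ys. ctl (ys!Suc 0)) (hd xs) (tl xs) = (ctl ^^ (xs!0)) (xs!Suc 0)"
      using B[of a b] by (simp only: list.sel nth_Cons_0 nth_Cons_Suc One_nat_def)
  qed
qed

lemma rcomp_ctl [intro]: "rcomp n f \<Longrightarrow> rcomp n (\<lambda>xs. ctl (f xs))"
  unfolding ctl_def by (intro rcomp_snd rcomp_sub rcomp_const)

lemma rcomp_chd [intro]: "rcomp n f \<Longrightarrow> rcomp n (\<lambda>xs. chd (f xs))"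
  unfolding chd_def by (intro rcomp_fst rcomp_sub rcomp_const)

lemma rcomp_nthc [intro]: "rcomp n f \<Longrightarrow> rcomp n g \<Longrightarrow> rcomp n (\<lambda>xs. nthc (f xs) (g xs))"
  unfolding nthc_def by (intro rcomp_chd rcomp_comp2[OF rcomp_tlpow2, of n g f])

lemma LB_step:
  assumes "t \<le> m"
  shows "PR (\<lambda>_. 0) (\<lambda>ys. Suc (prod_encode (g (ys!2 - Suc (ys!0)) (drop 3 ys), ys!1))) t (m # xs)
         = list_encode (map (\<lambda>j. g j xs) [m - t..<m])"
  using assms
proof (induction t)
  case 0 then show ?case by simp
next
  case (Suc t)
  have "[m - Suc t..<m] = (m - Suc t) # [m - t..<m]"
    using Suc.prems by (simp add: upt_conv_Cons Suc_diff_Suc)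
  then show ?case using Suc by (simp add: numeral_eq_Suc)
qed

lemma rcomp_LB [intro]:
  assumes "rcomp (Suc n) (\<lambda>ys. g (hd ys) (tl ys))" "rcomp n nf"
  shows "rcomp n (\<lambda>xs. list_encode (map (\<lambda>j. g j xs) [0..<nf xs]))"
proof -
  let ?gs = "\<lambda>ys. Suc (prod_encode (g (ys!2 - Suc (ys!0)) (drop 3 ys), ys!1))"
  have G: "rcomp (3 + n) (\<lambda>ys. g (ys!2 - Suc (ys!0)) (drop 3 ys))"
    by (rule rcomp_sub_arg[OF assms(1)]) (intro rcomp_sub rcomp_suc rcomp_proj; simp)
  have G': "rcomp (Suc (Suc (Suc n))) ?gs"
    using G by (intro rcomp_suc rcomp_penc rcomp_proj) (auto simp: numeral_eq_Suc)
  have P: "rcomp (Suc (Suc n)) (\<lambda>zs. PR (\<lambda>_. 0) ?gs (hd zs) (tl zs))"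
    by (rule rcomp_Pr[OF rcomp_zero G'])
  have H: "rcomp (0 + n) (\<lambda>ys. (\<lambda>zs. PR (\<lambda>_. 0) ?gs (hd zs) (tl zs)) (map (\<lambda>f. f ys) [nf, nf] @ drop 0 ys))"
    by (rule rcomp_Cn_drop) (use P assms(2) in \<open>auto simp: numeral_eq_Suc\<close>)
  show ?thesis
  proof (rule rcomp_cong[OF H[unfolded add_0]])
    fix xs :: "nat list"
    show "(\<lambda>zs. PR (\<lambda>_. 0) ?gs (hd zs) (tl zs)) (map (\<lambda>f. f xs) [nf, nf] @ drop 0 xs) =
      list_encode (map (\<lambda>j. g j xs) [0..<nf xs])"
      using LB_step[of "nf xs" "nf xs" g xs] by simp
  qed
qed

section \<open>The concrete reduction\<close>

definition kk :: "nat \<Rightarrow> nat" where "kk N = fst (prod_decode N)"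
definition AA :: "nat \<Rightarrow> nat" where "AA N = fst (prod_decode (snd (prod_decode N)))"
definition UU :: "nat \<Rightarrow> nat" where "UU N = snd (prod_decode (snd (prod_decode N)))"

definition Ec :: "nat \<Rightarrow> nat \<Rightarrow> nat" where
  "Ec K j = list_encode (map (\<lambda>l. (if l = 0 then 1 else 0) + (if (l - j) + (j - l) = 0 then 1 else 0)) [0..<K])"

definition Cc :: "nat \<Rightarrow> nat \<Rightarrow> nat \<Rightarrow> nat \<Rightarrow> nat" where
  "Cc K A i j = (if K - Suc i = 0 then nthc A j
      else (if (j - Suc i) + (Suc i - j) = 0 then enc_rat 1 else enc_rat 0))"

definition Pc :: "nat \<Rightarrow> nat \<Rightarrow> nat" where
  "Pc K A = list_encode (map (\<lambda>i. list_encode (map (\<lambda>j. prod_encode (Cc K A i j, Ec K j)) [0..<K])) [0..<K])"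

definition Tc :: "nat \<Rightarrow> nat" where
  "Tc K = list_encode (map (\<lambda>j. enc_rat 0) [0..<K])"

definition Fn :: "nat \<Rightarrow> nat" where
  "Fn N = prod_encode (kk N, prod_encode (Pc (kk N) (AA N), prod_encode (UU N, Tc (kk N))))"

lemma rcomp_kk [intro]: "rcomp n f \<Longrightarrow> rcomp n (\<lambda>xs. kk (f xs))"
  unfolding kk_def by (intro rcomp_fst)
lemma rcomp_AA [intro]: "rcomp n f \<Longrightarrow> rcomp n (\<lambda>xs. AA (f xs))"
  unfolding AA_def by (intro rcomp_fst rcomp_snd)
lemma rcomp_UU [intro]: "rcomp n f \<Longrightarrow> rcomp n (\<lambda>xs. UU (f xs))"
  unfolding UU_def by (intro rcomp_snd)

lemma rcomp_Ec [intro]: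
  assumes a: "rcomp n a" and b: "rcomp n b"
  shows "rcomp n (\<lambda>xs. Ec (a xs) (b xs))"
  unfolding Ec_def
  by (intro rcomp_LB rcomp_add rcomp_if rcomp_sub rcomp_const rcomp_hd rcomp_tl[OF b] a; simp)

lemma rcomp_Cc [intro]:
  assumes "rcomp n K" "rcomp n A" "rcomp n i" "rcomp n j"
  shows "rcomp n (\<lambda>xs. Cc (K xs) (A xs) (i xs) (j xs))"
  unfolding Cc_def
  by (intro rcomp_if rcomp_sub rcomp_suc rcomp_nthc rcomp_add rcomp_const assms)

lemma rcomp_Pc [intro]:
  assumes K: "rcomp n K" and A: "rcomp n A"
  shows "rcomp n (\<lambda>xs. Pc (K xs) (A xs))"
proof -
  note K1 = rcomp_tl[OF K] and A1 = rcomp_tl[OF A]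
  note K2 = rcomp_tl[OF K1] and A2 = rcomp_tl[OF A1]
  note H1 = rcomp_tl[OF rcomp_hd[OF zero_less_Suc[of n]]]
  show ?thesis unfolding Pc_def
    by (intro rcomp_LB rcomp_penc rcomp_Cc rcomp_Ec K K1 K2 A2 H1 rcomp_hd; simp)
qed

lemma rcomp_Tc [intro]: "rcomp n K \<Longrightarrow> rcomp n (\<lambda>xs. Tc (K xs))"
  unfolding Tc_def by (intro rcomp_LB rcomp_const)

lemma rcomp_Fn: "rcomp 1 (\<lambda>xs. Fn (xs ! 0))"
  unfolding Fn_def by (intro rcomp_penc rcomp_kk rcomp_Pc rcomp_AA rcomp_UU rcomp_Tc rcomp_proj; simp)

section \<open>Correctness of the encoding\<close>

definition coefq :: "nat \<Rightarrow> rat list \<Rightarrow> nat \<Rightarrow> nat \<Rightarrow> rat" where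
  "coefq k a i j = (if Suc i = k then a ! j else if j = Suc i then 1 else 0)"

definition expo :: "nat \<Rightarrow> nat \<Rightarrow> nat list" where
  "expo k j = map (\<lambda>l. (if l = 0 then 1 else 0) + (if l = j then 1 else 0)) [0..<k]"

definition mkps :: "nat \<Rightarrow> rat list \<Rightarrow> mpoly_rep list" where
  "mkps k a = map (\<lambda>i. map (\<lambda>j. (coefq k a i j, expo k j)) [0..<k]) [0..<k]"

definition mkJ :: "skolem_inst \<Rightarrow> p2p_inst" where
  "mkJ I = (case I of (k, a, u0) \<Rightarrow> (k, mkps k a, u0, replicate k 0))"

lemma Fn_correct:
  assumes "length a = k"
  shows "Fn (enc_skolem (k, a, u0)) = enc_p2p (mkJ (k, a, u0))"
proof -
  have C: "Cc k (enc_rats a) i j = enc_rat (coefq k a i j)" if "i < k" "j < k" for i j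
  proof (cases "Suc i = k")
    case True
    then have "k - Suc i = 0" by simp
    then show ?thesis using True that assms
      by (simp add: Cc_def coefq_def enc_rats_def nthc_correct)
  next
    case False
    then have "k - Suc i \<noteq> 0" using that by simp
    moreover have "((j - Suc i) + (Suc i - j) = 0) = (j = Suc i)" by auto
    ultimately show ?thesis using False by (simp add: Cc_def coefq_def)
  qed
  have E: "Ec k j = list_encode (expo k j)" for j
  proof -
    have "\<And>l. ((l - j) + (j - l) = 0) = (l = j)" by auto
    then show ?thesis by (simp add: Ec_def expo_def)
  qed
  have P: "Pc k (enc_rats a) = list_encode (map enc_mpoly (mkps k a))"
    unfolding Pc_def mkps_def enc_mpoly_def enc_mono_def
    by (simp add: E list_encode_eq C)
  have T: "Tc k = enc_rats (replicate k 0)"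
    by (simp add: Tc_def enc_rats_def map_replicate_const)
  show ?thesis
    by (simp add: Fn_def enc_skolem_def enc_p2p_def mkJ_def kk_def AA_def UU_def P T)
qed

section \<open>Semantics of the reduction\<close>

lemma win_len:
  assumes "length u0 = k" "k \<ge> 1"
  shows "length (lrs_window k a u0 n) = k"
proof (induction n)
  case 0 then show ?case using assms by simp
next
  case (Suc n) then show ?case using assms(2) by (simp add: Let_def)
qed

lemma win_Suc_nth:
  assumes "length u0 = k" "k \<ge> 1" "i < k"
  shows "lrs_window k a u0 (Suc n) ! i =
    (if Suc i < k then lrs_window k a u0 n ! Suc i
     else (\<Sum>j<k. a ! j * lrs_window k a u0 n ! j))"
  using win_len[OF assms(1,2), of a n] assms(3)
  by (auto simp: Let_def nth_append nth_tl)

lemma prod_expo: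
  fixes y :: "rat list"
  assumes "j < k"
  shows "(\<Prod>l<length (expo k j). (y ! l) ^ (expo k j ! l)) = y ! 0 * y ! j"
proof -
  have "(\<Prod>l<length (expo k j). (y ! l) ^ (expo k j ! l))
      = (\<Prod>l<k. (if l = 0 then y ! l else 1) * (if l = j then y ! l else 1))"
    by (intro prod.cong) (auto simp: expo_def power_add)
  also have "\<dots> = (\<Prod>l<k. (if l = 0 then y ! l else 1)) * (\<Prod>l<k. (if l = j then y ! l else 1))"
    by (rule prod.distrib)
  also have "\<dots> = y ! 0 * y ! j" using assms by (simp add: prod.delta)
  finally show ?thesis .
qed

lemma eval_row:
  fixes y :: "rat list"
  shows "mpoly_eval (map (\<lambda>j. (coefq k a i j, expo k j)) [0..<k]) y
      = (\<Sum>j<k. coefq k a i j * (y ! 0 * y ! j))"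
proof -
  have "mpoly_eval (map (\<lambda>j. (coefq k a i j, expo k j)) [0..<k]) y
      = sum_list (map (\<lambda>j. coefq k a i j * (\<Prod>l<length (expo k j). (y ! l) ^ (expo k j ! l))) [0..<k])"
    by (simp add: mpoly_eval_def comp_def)
  also have "\<dots> = (\<Sum>j\<in>set [0..<k]. coefq k a i j * (\<Prod>l<length (expo k j). (y ! l) ^ (expo k j ! l)))"
    by (rule sum_set_upt_conv_sum_list_nat[symmetric])
  also have "\<dots> = (\<Sum>j<k. coefq k a i j * (y ! 0 * y ! j))"
    by (simp add: atLeast0LessThan prod_expo)
  finally show ?thesis .
qed

primrec cfac :: "nat \<Rightarrow> rat list \<Rightarrow> rat list \<Rightarrow> nat \<Rightarrow> rat" where
  "cfac k a u0 0 = 1"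
| "cfac k a u0 (Suc n) = cfac k a u0 n * cfac k a u0 n * (lrs_window k a u0 n ! 0)"

lemma state_eq:
  assumes "length u0 = k" "k \<ge> 1"
  shows "p2p_state (mkps k a) u0 n = map (\<lambda>x. cfac k a u0 n * x) (lrs_window k a u0 n)"
proof (induction n)
  case 0 then show ?case by simp
next
  case (Suc n)
  let ?w = "lrs_window k a u0 n" and ?c = "cfac k a u0 n"
  have lw: "length ?w = k" "length (lrs_window k a u0 (Suc n)) = k"
    by (simp_all only: win_len[OF assms])
  show ?case
  proof (rule nth_equalityI)
    show "length (p2p_state (mkps k a) u0 (Suc n)) =
      length (map (\<lambda>x. cfac k a u0 (Suc n) * x) (lrs_window k a u0 (Suc n)))"
      using lw by (simp add: mkps_def)
  next
    fix i assume "i < length (p2p_state (mkps k a) u0 (Suc n))"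
    then have i: "i < k" by (simp add: mkps_def)
    have y0: "map (\<lambda>x. ?c * x) ?w ! j = ?c * ?w ! j" if "j < k" for j using that lw by simp
    have "p2p_state (mkps k a) u0 (Suc n) ! i
        = (\<Sum>j<k. coefq k a i j * ((?c * ?w ! 0) * (?c * ?w ! j)))"
    proof -
      have st: "p2p_state (mkps k a) u0 (Suc n) = map (\<lambda>p. mpoly_eval p (map (\<lambda>x. ?c * x) ?w)) (mkps k a)"
        using Suc.IH by simp
      have mi: "mkps k a ! i = map (\<lambda>j. (coefq k a i j, expo k j)) [0..<k]"
        using i by (simp add: mkps_def)
      have "p2p_state (mkps k a) u0 (Suc n) ! i = mpoly_eval (mkps k a ! i) (map (\<lambda>x. ?c * x) ?w)"
        using i by (simp only: st, simp add: mkps_def)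
      also have "\<dots> = (\<Sum>j<k. coefq k a i j * (map (\<lambda>x. ?c * x) ?w ! 0 * map (\<lambda>x. ?c * x) ?w ! j))"
        by (simp only: mi eval_row)
      also have "\<dots> = (\<Sum>j<k. coefq k a i j * ((?c * ?w ! 0) * (?c * ?w ! j)))"
        using i by (intro sum.cong refl) (simp add: y0)
      finally show ?thesis .
    qed
    also have "\<dots> = (?c * ?c * ?w ! 0) * (\<Sum>j<k. coefq k a i j * ?w ! j)"
      by (simp add: sum_distrib_left algebra_simps)
    also have "(\<Sum>j<k. coefq k a i j * ?w ! j) = lrs_window k a u0 (Suc n) ! i"
    proof (cases "Suc i = k")
      case True then show ?thesis using win_Suc_nth[OF assms i, of a n] by (simp add: coefq_def)
    next
      case False
      then have "Suc i < k" using i by simp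
      then have "(\<Sum>j<k. coefq k a i j * ?w ! j) = (\<Sum>j<k. if j = Suc i then ?w ! j else 0)"
        using False by (intro sum.cong) (auto simp: coefq_def)
      also have "\<dots> = ?w ! Suc i" using \<open>Suc i < k\<close> by (simp add: sum.delta)
      finally show ?thesis using win_Suc_nth[OF assms i, of a n] \<open>Suc i < k\<close> by simp
    qed
    finally show "p2p_state (mkps k a) u0 (Suc n) ! i =
        map (\<lambda>x. cfac k a u0 (Suc n) * x) (lrs_window k a u0 (Suc n)) ! i"
      using lw i by simp
  qed
qed

lemma cfac_zero: "cfac k a u0 n = 0 \<Longrightarrow> \<exists>j<n. lrs_window k a u0 j ! 0 = 0"
  by (induction n) (auto, metis less_Suc_eq)

lemma semantics:
  assumes "skolem_wf I"
  shows "p2p_wf (mkJ I) \<and> (skolem_has_zero I \<longleftrightarrow> p2p_reaches (mkJ I))"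
proof -
  obtain k a u0 where I: "I = (k, a, u0)" by (cases I) auto
  have k: "k \<ge> 1" "length a = k" "length u0 = k" "a ! 0 \<noteq> 0"
    using assms by (auto simp: skolem_wf_def I)
  have lw: "length (lrs_window k a u0 n) = k" for n using win_len[OF k(3,1)] .
  have wf: "p2p_wf (mkJ I)"
    using k by (auto simp: p2p_wf_def mkJ_def I mkps_def mpoly_wf_def expo_def)
  have lrs0: "lrs I n = lrs_window k a u0 n ! 0" for n
    using lw[of n] k(1) by (cases "lrs_window k a u0 n") (auto simp: lrs_def I)
  have "skolem_has_zero I \<longleftrightarrow> (\<exists>m. p2p_state (mkps k a) u0 m = replicate k 0)"
  proof
    assume "skolem_has_zero I"
    then obtain m where "lrs_window k a u0 m ! 0 = 0" by (auto simp: skolem_has_zero_def lrs0)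
    then have "cfac k a u0 (Suc m) = 0" by simp
    then have "p2p_state (mkps k a) u0 (Suc m) = replicate k 0"
      using state_eq[OF k(3,1), of a "Suc m"] lw[of "Suc m"]
      by (simp only: mult_zero_left map_replicate_const)
    then show "\<exists>m. p2p_state (mkps k a) u0 m = replicate k 0" by blast
  next
    assume "\<exists>m. p2p_state (mkps k a) u0 m = replicate k 0"
    then obtain m where m: "map (\<lambda>x. cfac k a u0 m * x) (lrs_window k a u0 m) = replicate k 0"
      using state_eq[OF k(3,1)] by metis
    then have "cfac k a u0 m * lrs_window k a u0 m ! 0 = 0"
      using lw[of m] k(1) by (metis (no_types, lifting) One_nat_def less_le_trans nth_map nth_replicate zero_less_one)
    then have "cfac k a u0 m = 0 \<or> lrs_window k a u0 m ! 0 = 0" by simp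
    then show "skolem_has_zero I"
      using cfac_zero[of k a u0 m] by (auto simp: skolem_has_zero_def lrs0)
  qed
  then show ?thesis using wf by (simp add: p2p_reaches_def mkJ_def I)
qed

theorem theorem3p3:
  shows "\<exists>R :: recf. \<forall>I :: skolem_inst. skolem_wf I \<longrightarrow>
           (\<exists>J :: p2p_inst. reval R [enc_skolem I] (enc_p2p J) \<and> p2p_wf J \<and>
                (skolem_has_zero I \<longleftrightarrow> p2p_reaches J))"
proof -
  obtain R where R: "\<forall>xs. length xs = 1 \<longrightarrow> reval R xs (Fn (xs ! 0))"
    using rcomp_Fn rcomp_def by auto
  show ?thesis
  proof (rule exI[of _ R], intro allI impI)
    fix I :: skolem_inst assume wf: "skolem_wf I"
    obtain k a u0 where I: "I = (k, a, u0)" by (cases I) auto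
    have "length a = k" using wf by (simp add: skolem_wf_def I)
    then have "Fn (enc_skolem I) = enc_p2p (mkJ I)" using Fn_correct I by simp
    then have "reval R [enc_skolem I] (enc_p2p (mkJ I))" using R[rule_format, of "[enc_skolem I]"] by simp
    then show "\<exists>J. reval R [enc_skolem I] (enc_p2p J) \<and> p2p_wf J \<and> (skolem_has_zero I \<longleftrightarrow> p2p_reaches J)"
      using semantics[OF wf] by blast
  qed
qed

end
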